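(* Let $n$ be even. For all $v_0,\dots,v_n\in\mathbb{R}^n$, $$P(v_0,\dots,v_n)=(-1)^{n/2}\,2^n\,\mathrm{Sm}(v_0,\dots,v_n).$$
   Context: $\mathrm{Or}(v_1,\dots,v_n)=\operatorname{sign}\det(v_1,\dots,v_n)$ (zero if not a basis). $P(v_0,\dots,v_n)=\prod_{i=0}^n\mathrm{Or}(v_0,\dots,\widehat{v_i},\dots,v_n)$. $S(v_0,\dots,v_n)=0$ if $0$ is not in the interior of the convex hull of $v_0,\dots,v_n$, and otherwise $S(v_0,\dots,v_n)=(-1)^i\mathrm{Or}(v_0,\dots,\widehat{v_i},\dots,v_n)$ for any $i$ (independent of $i$). $\mathrm{Sm}(v_0,\dots,v_n)=2^{-(n+1)}\sum_{\sigma_i\in\{\pm1\}}S(\sigma_0v_0,\dots,\sigma_nv_n)$. *)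

theory Defs
  imports "HOL-Analysis.Analysis" "HOL-Library.Numeral_Type"
begin

text \<open>Vectors live in real^'n; the index type 'n is linearly ordered, which
  fixes the identification of 'n with the coordinates 1..n (needed to speak of
  the sign of the determinant of an ordered list of n vectors).\<close>

definition coord_rank :: "'n::{finite,linorder} \<Rightarrow> nat" where
  "coord_rank k = card {j. j < k}"

text \<open>Or(w_1,...,w_n) = sign det(w_1,...,w_n); the matrix has the vectors as rows
  (same determinant as with columns). It is 0 exactly when the w_i are not a basis.\<close>
definition Or :: "(real^('n::{finite,linorder})) list \<Rightarrow> real" where
  "Or ws = sgn (det ((\<chi> k. ws ! coord_rank k) :: real^'n::{finite,linorder}^'n::{finite,linorder}))"

definition omit :: "(nat \<Rightarrow> 'a) \<Rightarrow> nat \<Rightarrow> nat \<Rightarrow> 'a list" where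
  "omit v m i = map v ([0..<i] @ [Suc i..<Suc m])"

definition Pfun :: "(nat \<Rightarrow> real^('n::{finite,linorder})) \<Rightarrow> real" where
  "Pfun v = (\<Prod>i\<in>{0..CARD('n)}. Or (omit v CARD('n) i))"

text \<open>S: 0 unless 0 is in the interior of the convex hull of v_0..v_n; otherwise
  (-1)^i Or(v_0,..,\<hat>v_i,..,v_n), here taken with i = 0.\<close>
definition Sfun :: "(nat \<Rightarrow> real^('n::{finite,linorder})) \<Rightarrow> real" where
  "Sfun v = (if 0 \<in> interior (convex hull (v ` {0..CARD('n)}))
             then Or (omit v CARD('n) 0) else 0)"

definition Sm :: "(nat \<Rightarrow> real^('n::{finite,linorder})) \<Rightarrow> real" where
  "Sm v = (1 / 2 ^ (CARD('n) + 1)) *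
     (\<Sum>\<sigma>\<in>({0..CARD('n)} \<rightarrow>\<^sub>E {-1, 1::real}). Sfun (\<lambda>i. \<sigma> i *\<^sub>R v i))"

end

theory Submission
  imports Defs
begin


lemma rk_mono: "(k::'n::{finite,linorder}) < k' \<Longrightarrow> coord_rank k < coord_rank k'"
  unfolding coord_rank_def
  by (rule psubset_card_mono) auto

lemma rk_inj: "inj (coord_rank :: 'n::{finite,linorder} \<Rightarrow> nat)"
  by (metis injI linorder_neqE rk_mono less_irrefl)

lemma rk_lt: "coord_rank (k::'n::{finite,linorder}) < CARD('n)"
  unfolding coord_rank_def
  by (rule psubset_card_mono) auto

lemma rk_bij: "bij_betw (coord_rank :: 'n::{finite,linorder} \<Rightarrow> nat) UNIV {..<CARD('n)}"
proof -
  have "coord_rank ` (UNIV::'n set) \<subseteq> {..<CARD('n)}" using rk_lt by auto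
  moreover have "card (coord_rank ` (UNIV::'n set)) = CARD('n)"
    using rk_inj card_image by blast
  ultimately have "coord_rank ` (UNIV::'n set) = {..<CARD('n)}"
    by (simp add: card_subset_eq)
  then show ?thesis using rk_inj by (simp add: bij_betw_def)
qed

definition ri :: "nat \<Rightarrow> 'n::{finite,linorder}" where
  "ri s = inv coord_rank s"

lemma ri_rk [simp]: "ri (coord_rank k) = k"
  by (simp add: ri_def rk_inj)

lemma rk_ri [simp]: "s < CARD('n::{finite,linorder}) \<Longrightarrow> coord_rank (ri s :: 'n) = s"
  unfolding ri_def using rk_bij[where 'n='n]
  by (metis bij_betw_inv_into_right lessThan_iff)

lemma rk_eq_iff: "a < CARD('n::{finite,linorder}) \<Longrightarrow> coord_rank (k::'n) = a \<longleftrightarrow> k = ri a"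
  by (metis ri_rk rk_ri)

definition M :: "(nat \<Rightarrow> real^('n::{finite,linorder})) \<Rightarrow> real^('n::{finite,linorder})^('n::{finite,linorder})" where
  "M f = (\<chi> (k::'n::{finite,linorder}). f (coord_rank k))"

definition om :: "(nat \<Rightarrow> 'a::type) \<Rightarrow> nat \<Rightarrow> nat \<Rightarrow> 'a" where
  "om v i s = v (if s < i then s else Suc s)"

lemma omit_nth: "i \<le> m \<Longrightarrow> s < m \<Longrightarrow> omit v m i ! s = om v i s"
proof (cases "s < i")
  case True
  then show ?thesis unfolding omit_def om_def by (simp add: nth_append del: upt_Suc)
next
  case False
  assume "i \<le> m" "s < m"
  then have "[Suc i..<Suc m] ! (s - i) = Suc i + (s - i)" using False by (intro nth_upt) simp
  then show ?thesis using False \<open>s < m\<close> \<open>i \<le> m\<close> unfolding omit_def om_def by (simp add: nth_append del: upt_Suc)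
qed

lemma Or_omit: "i \<le> CARD('n) \<Longrightarrow> Or (omit v CARD('n) i) = sgn (det (M (om v i) :: real^('n::{finite,linorder})^('n::{finite,linorder})))"
  unfolding Or_def M_def by (simp add: omit_nth rk_lt)

lemma M_cong: "(\<And>s. s < CARD('n) \<Longrightarrow> f s = g s) \<Longrightarrow> M f = (M g :: real^('n::{finite,linorder})^('n::{finite,linorder}))"
  unfolding M_def by (simp add: rk_lt)

lemma det_M_swap:
  assumes "a \<noteq> b" "a < CARD('n)" "b < CARD('n)"
  shows "det (M (f \<circ> Transposition.transpose a b) :: real^('n::{finite,linorder})^('n::{finite,linorder})) = - det (M f :: real^('n::{finite,linorder})^('n::{finite,linorder}))"
proof -
  let ?p = "Transposition.transpose (ri a :: 'n) (ri b)"
  have ne: "ri a \<noteq> (ri b :: 'n)" using assms by (metis rk_ri)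
  have rp: "coord_rank (?p k) = Transposition.transpose a b (coord_rank k)" for k
  proof -
    have "coord_rank k = a \<longleftrightarrow> k = ri a" "coord_rank k = b \<longleftrightarrow> k = ri b"
      using assms rk_eq_iff by blast+
    then show ?thesis using assms unfolding transpose_def by auto
  qed
  have "M (f \<circ> Transposition.transpose a b) = (\<chi> k. (M f :: real^('n::{finite,linorder})^('n::{finite,linorder})) $ ?p k)"
    unfolding M_def using assms
    by (auto simp: vec_eq_iff rp)
  also have "det \<dots> = of_int (sign ?p) * det (M f)"
    by (rule det_permute_rows) (simp add: permutes_swap_id)
  finally show ?thesis using ne by (simp add: sign_swap_id)
qed

lemma det_M_ident:
  assumes "a \<noteq> b" "a < CARD('n)" "b < CARD('n)" "f a = f b"
  shows "det (M f :: real^('n::{finite,linorder})^('n::{finite,linorder})) = 0"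
proof -
  have ne: "ri a \<noteq> (ri b :: 'n)" using assms by (metis rk_ri)
  show ?thesis
    by (rule det_identical_rows[OF ne]) (simp add: M_def row_def assms vec_eq_iff)
qed

lemma sum_rk: "(\<Sum>k\<in>(UNIV::'n::{finite,linorder} set). g (coord_rank k)) = (\<Sum>s<CARD('n). g s)"
  using sum.reindex_bij_betw[OF rk_bij[where 'n='n], of g] by simp

lemma prod_rk: "(\<Prod>k\<in>(UNIV::'n::{finite,linorder} set). g (coord_rank k)) = (\<Prod>s<CARD('n). g s)"
  using prod.reindex_bij_betw[OF rk_bij[where 'n='n], of g] by simp

lemma row_M [simp]: "row k (M f :: real^('n::{finite,linorder})^('n::{finite,linorder})) = f (coord_rank k)"
  by (simp add: row_def M_def vec_eq_iff)

lemma M_indep: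
  assumes "det (M f :: real^('n::{finite,linorder})^('n::{finite,linorder})) \<noteq> 0"
    and "(\<Sum>s<CARD('n). b s *\<^sub>R f s) = 0" and "s < CARD('n)"
  shows "b s = 0"
proof -
  have "\<exists>B. (M f :: real^('n::{finite,linorder})^('n::{finite,linorder})) ** B = mat 1"
    using assms(1) invertible_det_nz invertible_right_inverse by blast
  then have H: "\<forall>c. (\<Sum>i\<in>(UNIV::'n set). c i *s row i (M f :: real^('n::{finite,linorder})^('n::{finite,linorder}))) = 0 \<longrightarrow> (\<forall>i. c i = 0)"
    using matrix_right_invertible_independent_rows by blast
  have "(\<Sum>i\<in>(UNIV::'n set). b (coord_rank i) *s row i (M f :: real^('n::{finite,linorder})^('n::{finite,linorder}))) = 0"
    using assms(2) sum_rk[where 'n='n, of "\<lambda>s. b s *\<^sub>R f s"] by (simp add: scalar_mult_eq_scaleR)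
  from H[rule_format, OF this] have "b (coord_rank (ri s :: 'n)) = 0" .
  then show ?thesis using assms(3) by simp
qed

lemma M_span:
  assumes "det (M f :: real^('n::{finite,linorder})^('n::{finite,linorder})) \<noteq> 0"
  shows "\<exists>b. y = (\<Sum>s<CARD('n). b s *\<^sub>R f s)"
proof -
  let ?A = "M f :: real^('n::{finite,linorder})^('n::{finite,linorder})"
  have "det (transpose ?A) \<noteq> 0" using assms by simp
  then obtain B where B: "transpose ?A ** B = mat 1"
    using invertible_det_nz invertible_right_inverse by blast
  let ?x = "B *v y"
  have "transpose ?A *v ?x = y" by (simp add: matrix_vector_mul_assoc B)
  then have "y = (\<Sum>k\<in>(UNIV::'n set). (?x $ k) *s row k ?A)"
    by (simp add: matrix_mult_sum)
  also have "\<dots> = (\<Sum>k\<in>(UNIV::'n set). (\<lambda>s. (?x $ ri s) *\<^sub>R f s) (coord_rank k))"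
    by (simp add: scalar_mult_eq_scaleR)
  also have "\<dots> = (\<Sum>s<CARD('n). (?x $ ri s) *\<^sub>R f s)" by (rule sum_rk)
  finally have "y = (\<Sum>s<CARD('n). (\<lambda>s. ?x $ ri s) s *\<^sub>R f s)" by simp
  then show ?thesis by metis
qed

lemma det_M_lin0:
  assumes "finite S" "0 < CARD('n)"
  shows "det (M (f(0 := (\<Sum>j\<in>S. a j *\<^sub>R u j))) :: real^('n::{finite,linorder})^('n::{finite,linorder}))
     = (\<Sum>j\<in>S. a j * det (M (f(0 := u j)) :: real^('n::{finite,linorder})^('n::{finite,linorder})))"
proof -
  let ?k = "ri 0 :: 'n"
  have e: "M (f(0 := x)) = (\<chi> k. if k = ?k then x else f (coord_rank k))" for x
    unfolding M_def using assms(2) by (auto simp: vec_eq_iff rk_eq_iff)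
  have "det (M (f(0 := (\<Sum>j\<in>S. a j *\<^sub>R u j))) :: real^('n::{finite,linorder})^('n::{finite,linorder}))
      = (\<Sum>j\<in>S. det ((\<chi> k. if k = ?k then a j *s u j else f (coord_rank k)) :: real^('n::{finite,linorder})^('n::{finite,linorder})))"
    unfolding e using det_linear_row_sum[OF assms(1), of ?k "\<lambda>i j. a j *s u j" "\<lambda>k. f (coord_rank k)"]
    unfolding scalar_mult_eq_scaleR by simp
  also have "\<dots> = (\<Sum>j\<in>S. a j * det (M (f(0 := u j)) :: real^('n::{finite,linorder})^('n::{finite,linorder})))"
    unfolding e by (simp add: det_row_mul)
  finally show ?thesis .
qed

definition dd :: "(nat \<Rightarrow> real^('n::{finite,linorder})) \<Rightarrow> nat \<Rightarrow> real" where
  "dd v i = det (M (om v i) :: real^('n::{finite,linorder})^('n::{finite,linorder}))"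

definition NN :: "(nat \<Rightarrow> 'a::type) \<Rightarrow> nat \<Rightarrow> nat \<Rightarrow> 'a" where
  "NN v i = (om v i)(0 := v i)"

lemma NN1: "NN v (Suc 0) = om v 0"
  unfolding NN_def om_def by (auto simp: fun_eq_iff)

lemma NNstep: "1 \<le> i \<Longrightarrow> NN v (Suc i) \<circ> Transposition.transpose 0 i = NN v i"
  unfolding NN_def om_def by (auto simp: fun_eq_iff Transposition.transpose_def)

lemma detNN:
  fixes v :: "nat \<Rightarrow> real^('n::{finite,linorder})"
  shows "k + 1 \<le> CARD('n) \<Longrightarrow> det (M (NN v (Suc k)) :: real^('n::{finite,linorder})^('n::{finite,linorder})) = (-1)^k * dd v 0"
proof (induction k)
  case 0
  then show ?case by (simp add: NN1 dd_def)
next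
  case (Suc k)
  have "det (M (NN v (Suc k)) :: real^('n::{finite,linorder})^('n::{finite,linorder}))
      = det (M (NN v (Suc (Suc k)) \<circ> Transposition.transpose 0 (Suc k)) :: real^('n::{finite,linorder})^('n::{finite,linorder}))"
    by (simp add: NNstep)
  also have "\<dots> = - det (M (NN v (Suc (Suc k))) :: real^('n::{finite,linorder})^('n::{finite,linorder}))"
    using Suc.prems by (intro det_M_swap) auto
  finally show ?case using Suc by simp
qed

lemma dd_expand:
  fixes v :: "nat \<Rightarrow> real^('n::{finite,linorder})"
  assumes a: "v 0 = (\<Sum>j\<in>{1..CARD('n)}. a j *\<^sub>R v j)" and i: "1 \<le> i" "i \<le> CARD('n)"
  shows "dd v i = a i * det (M (NN v i) :: real^('n::{finite,linorder})^('n::{finite,linorder}))"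
proof -
  have e: "om v i = (om v i)(0 := (\<Sum>j\<in>{1..CARD('n)}. a j *\<^sub>R v j))"
    using i a by (auto simp: fun_eq_iff om_def)
  have "dd v i = (\<Sum>j\<in>{1..CARD('n)}. a j * det (M ((om v i)(0 := v j)) :: real^('n::{finite,linorder})^('n::{finite,linorder})))"
    unfolding dd_def by (subst e) (rule det_M_lin0, auto)
  also have "\<dots> = a i * det (M ((om v i)(0 := v i)) :: real^('n::{finite,linorder})^('n::{finite,linorder}))
     + (\<Sum>j\<in>{1..CARD('n)} - {i}. a j * det (M ((om v i)(0 := v j)) :: real^('n::{finite,linorder})^('n::{finite,linorder})))"
    using i by (subst sum.remove[of _ i]) auto
  also have "(\<Sum>j\<in>{1..CARD('n)} - {i}. a j * det (M ((om v i)(0 := v j)) :: real^('n::{finite,linorder})^('n::{finite,linorder}))) = 0"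
  proof (rule sum.neutral, rule ballI)
    fix j assume j: "j \<in> {1..CARD('n)} - {i}"
    let ?b = "if j < i then j else j - 1"
    have "det (M ((om v i)(0 := v j)) :: real^('n::{finite,linorder})^('n::{finite,linorder})) = 0"
      using j i by (intro det_M_ident[of 0 ?b]) (auto simp: om_def)
    then show "a j * det (M ((om v i)(0 := v j)) :: real^('n::{finite,linorder})^('n::{finite,linorder})) = 0" by simp
  qed
  finally show ?thesis by (simp only: NN_def add_0_right)
qed

lemma om0: "om v 0 = (\<lambda>s. v (Suc s))"
  by (simp add: fun_eq_iff om_def)

lemma cramer_dep:
  fixes v :: "nat \<Rightarrow> real^('n::{finite,linorder})"
  assumes "dd v 0 \<noteq> 0"
  shows "(\<Sum>i\<in>{0..CARD('n)}. ((-1)^i * dd v i) *\<^sub>R v i) = 0"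
proof -
  have "det (M (\<lambda>s. v (Suc s)) :: real^('n::{finite,linorder})^('n::{finite,linorder})) \<noteq> 0"
    using assms by (simp add: dd_def om0)
  from M_span[OF this, of "v 0"] obtain b where b: "v 0 = (\<Sum>s<CARD('n). b s *\<^sub>R v (Suc s))" by blast
  define a where "a j = b (j - 1)" for j
  have a: "v 0 = (\<Sum>j\<in>{1..CARD('n)}. a j *\<^sub>R v j)"
    using b by (simp add: a_def sum.atLeast1_atMost_eq)
  have di: "dd v i = a i * ((-1)^(i - 1) * dd v 0)" if h: "1 \<le> i" "i \<le> CARD('n)" for i
  proof -
    obtain k where k: "i = Suc k" using h by (cases i) auto
    show ?thesis using dd_expand[OF a h] detNN[of k v] h k by simp
  qed
  have "(\<Sum>i\<in>{0..CARD('n)}. ((-1)^i * dd v i) *\<^sub>R v i)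
      = dd v 0 *\<^sub>R v 0 + (\<Sum>i\<in>{Suc 0..CARD('n)}. ((-1)^i * dd v i) *\<^sub>R v i)"
    by (simp add: sum.atLeast_Suc_atMost)
  also have "(\<Sum>i\<in>{Suc 0..CARD('n)}. ((-1)^i * dd v i) *\<^sub>R v i) = (\<Sum>i\<in>{Suc 0..CARD('n)}. (- dd v 0) *\<^sub>R (a i *\<^sub>R v i))"
  proof (rule sum.cong[OF refl])
    fix i assume "i \<in> {Suc 0..CARD('n)}"
    then obtain k where k: "i = Suc k" "Suc k \<le> CARD('n)" by (cases i) auto
    show "((-1)^i * dd v i) *\<^sub>R v i = (- dd v 0) *\<^sub>R (a i *\<^sub>R v i)"
      using di[of i] k by simp
  qed
  also have "\<dots> = (- dd v 0) *\<^sub>R v 0" using a by (simp add: scaleR_sum_right)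
  finally show ?thesis by simp
qed

lemma nondeg_of_int:
  fixes w :: "nat \<Rightarrow> real^('n::{finite,linorder})"
  assumes int: "0 \<in> interior (convex hull (w ` {0..CARD('n)}))" and i: "i \<le> CARD('n)"
  shows "dd w i \<noteq> 0"
proof
  assume d0: "dd w i = 0"
  let ?A = "M (om w i) :: real^('n::{finite,linorder})^('n::{finite,linorder})"
  have "\<not> (\<exists>B. B ** ?A = mat 1)"
    using d0 invertible_det_nz invertible_left_inverse unfolding dd_def by blast
  then obtain y where y: "?A *v y = 0" "y \<noteq> 0"
    unfolding matrix_left_invertible_ker by blast
  have ys: "om w i s \<bullet> y = 0" if "s < CARD('n)" for s
  proof -
    have "(?A *v y) $ (ri s) = 0" using y by simp
    then show ?thesis using that by (simp add: matrix_vector_mul_component M_def)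
  qed
  have yj: "w j \<bullet> y = 0" if "j \<le> CARD('n)" "j \<noteq> i" for j
  proof -
    let ?s = "if j < i then j else j - 1"
    have "?s < CARD('n)" "om w i ?s = w j" using that i by (auto simp: om_def)
    then show ?thesis using ys by metis
  qed
  define z where "z = (if w i \<bullet> y \<ge> 0 then y else - y)"
  have z0: "z \<noteq> 0" using y(2) by (simp add: z_def)
  have zj: "z \<bullet> w j \<ge> 0" if "j \<le> CARD('n)" for j
    using yj[of j] that by (cases "j = i") (auto simp: z_def inner_commute)
  have "w ` {0..CARD('n)} \<subseteq> {x. z \<bullet> x \<ge> 0}" using zj by auto
  then have hs: "convex hull (w ` {0..CARD('n)}) \<subseteq> {x. z \<bullet> x \<ge> 0}"
    by (intro hull_minimal convex_halfspace_ge)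
  have "interior (convex hull (w ` {0..CARD('n)})) \<subseteq> {x. z \<bullet> x > 0}"
    using interior_mono[OF hs] z0 by simp
  then show False using int by auto
qed

lemma dep_uniq:
  fixes w :: "nat \<Rightarrow> real^('n::{finite,linorder})"
  assumes d: "dd w 0 \<noteq> 0"
    and mu: "(\<Sum>i\<in>{0..CARD('n)}. mu i *\<^sub>R w i) = 0"
    and nu: "(\<Sum>i\<in>{0..CARD('n)}. nu i *\<^sub>R w i) = 0"
    and i: "i \<le> CARD('n)"
  shows "mu i * nu 0 = nu i * mu 0"
proof -
  define c where "c j = mu j * nu 0 - nu j * mu 0" for j
  have "(\<Sum>j\<in>{0..CARD('n)}. c j *\<^sub>R w j) = nu 0 *\<^sub>R (\<Sum>j\<in>{0..CARD('n)}. mu j *\<^sub>R w j) - mu 0 *\<^sub>R (\<Sum>j\<in>{0..CARD('n)}. nu j *\<^sub>R w j)"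
    by (simp add: c_def scaleR_sum_right sum_subtractf scaleR_diff_left mult.commute)
  then have "(\<Sum>j\<in>{0..CARD('n)}. c j *\<^sub>R w j) = 0" using mu nu by simp
  moreover have "(\<Sum>j\<in>{0..CARD('n)}. c j *\<^sub>R w j) = c 0 *\<^sub>R w 0 + (\<Sum>j\<in>{Suc 0..CARD('n)}. c j *\<^sub>R w j)"
    by (simp add: sum.atLeast_Suc_atMost)
  moreover have "c 0 = 0" by (simp add: c_def)
  ultimately have "(\<Sum>s<CARD('n). c (Suc s) *\<^sub>R w (Suc s)) = 0"
    by (simp add: sum.atLeast1_atMost_eq)
  moreover have "det (M (\<lambda>s. w (Suc s)) :: real^('n::{finite,linorder})^('n::{finite,linorder})) \<noteq> 0"
    using d by (simp add: dd_def om0)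
  ultimately have cs: "c (Suc s) = 0" if "s < CARD('n)" for s
    using M_indep[of "\<lambda>s. w (Suc s)" "\<lambda>s. c (Suc s)" s] that by simp
  have "c i = 0"
  proof (cases i)
    case 0 then show ?thesis by (simp add: c_def)
  next
    case (Suc s) then show ?thesis using cs i by simp
  qed
  then show ?thesis by (simp add: c_def)
qed


lemma pos_dep_of_int:
  fixes w :: "nat \<Rightarrow> real^('n::{finite,linorder})"
  assumes int: "0 \<in> interior (convex hull (w ` {0..CARD('n)}))"
  shows "inj_on w {0..CARD('n)} \<and> (\<exists>mu. (\<forall>i\<le>CARD('n). mu i > 0) \<and> (\<Sum>i\<in>{0..CARD('n)}. mu i *\<^sub>R w i) = 0)"
proof -
  let ?S = "w ` {0..CARD('n)}"
  have fin: "finite ?S" by simp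
  have le: "card ?S \<le> Suc (CARD('n))" using card_image_le[of "{0..CARD('n)}" w] by simp
  have "\<not> card ?S \<le> DIM(real^('n::{finite,linorder}))"
  proof
    assume "card ?S \<le> DIM(real^('n::{finite,linorder}))"
    have "interior (convex hull ?S) = {}" by (rule empty_interior_convex_hull[OF fin \<open>card ?S \<le> DIM(real^('n::{finite,linorder}))\<close>])
    then show False using int by simp
  qed
  then have cS: "card ?S = Suc (CARD('n))" using le by simp
  then have inj: "inj_on w {0..CARD('n)}" by (intro eq_card_imp_inj_on) auto
  have cS': "card ?S = Suc DIM(real^('n::{finite,linorder}))" using cS by simp
  have "interior (convex hull ?S) \<noteq> {}" using int by blast
  then have nad: "\<not> affine_dependent ?S" using interior_convex_hull_eq_empty[OF cS'] by simp
  have "\<not> card ?S \<le> DIM(real^('n::{finite,linorder}))" using cS by simp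
  then have "interior (convex hull ?S) = {y. \<exists>u. (\<forall>x \<in> ?S. 0 < u x) \<and> sum u ?S = 1 \<and> (\<Sum>x\<in>?S. u x *\<^sub>R x) = y}"
    using interior_convex_hull_explicit_minimal[OF nad] by (simp only: if_False)
  then obtain u where u: "\<forall>x\<in>?S. 0 < u x" "(\<Sum>x\<in>?S. u x *\<^sub>R x) = 0" using int by blast
  have "(\<Sum>x\<in>?S. u x *\<^sub>R x) = (\<Sum>i\<in>{0..CARD('n)}. u (w i) *\<^sub>R w i)"
    by (simp add: sum.reindex[OF inj])
  then have "(\<forall>i\<le>CARD('n). u (w i) > 0) \<and> (\<Sum>i\<in>{0..CARD('n)}. u (w i) *\<^sub>R w i) = 0"
    using u by auto
  then have "\<exists>mu. (\<forall>i\<le>CARD('n). mu i > 0) \<and> (\<Sum>i\<in>{0..CARD('n)}. mu i *\<^sub>R w i) = 0"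
    by (intro exI[of _ "\<lambda>i. u (w i)"]) simp
  with inj show ?thesis by simp
qed


lemma inj_of_nondeg:
  fixes w :: "nat \<Rightarrow> real^('n::{finite,linorder})"
  assumes n2: "2 \<le> CARD('n)" and nd: "\<forall>i\<le>CARD('n). dd w i \<noteq> 0"
  shows "inj_on w {0..CARD('n)}"
proof -
  have H: False if ij: "i < j" "j \<le> CARD('n)" "w i = w j" for i j
  proof -
    define k where "k = (if 0 < i then 0 else if j = 1 then 2 else (1::nat))"
    have k: "k \<le> CARD('n)" "k \<noteq> i" "k \<noteq> j" using ij n2 by (auto simp: k_def)
    let ?p = "if i < k then i else i - 1"
    let ?q = "if j < k then j else j - 1"
    have "?p \<noteq> ?q" "?p < CARD('n)" "?q < CARD('n)" using k ij by auto
    moreover have "om w k ?p = om w k ?q" using k ij by (auto simp: om_def)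
    ultimately have "dd w k = 0" unfolding dd_def by (intro det_M_ident[of ?p ?q]) auto
    then show False using nd k by auto
  qed
  show ?thesis
  proof (rule inj_onI)
    fix i j assume "i \<in> {0..CARD('n)}" "j \<in> {0..CARD('n)}" "w i = w j"
    then show "i = j" using H[of i j] H[of j i] by (cases i j rule: linorder_cases) auto
  qed
qed



lemma int_of_pos_dep:
  fixes w :: "nat \<Rightarrow> real^('n::{finite,linorder})"
  assumes n2: "2 \<le> CARD('n)" and nd: "\<forall>i\<le>CARD('n). dd w i \<noteq> 0"
    and mu: "\<forall>i\<le>CARD('n). mu i > 0" "(\<Sum>i\<in>{0..CARD('n)}. mu i *\<^sub>R w i) = 0"
  shows "0 \<in> interior (convex hull (w ` {0..CARD('n)}))"
proof -
  let ?S = "w ` {0..CARD('n)}"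
  have inj: "inj_on w {0..CARD('n)}" using inj_of_nondeg[OF n2 nd] .
  have cS: "card ?S = Suc (CARD('n))" using card_image[OF inj] by simp
  have spos: "(\<Sum>i\<in>{0..CARD('n)}. mu i) > 0" using mu(1) by (intro sum_pos) auto
  have d0: "dd w 0 \<noteq> 0" using nd by simp
  have nad: "\<not> affine_dependent ?S"
  proof
    assume "affine_dependent ?S"
    then obtain U where U: "sum U ?S = 0" "\<exists>v\<in>?S. U v \<noteq> 0" "(\<Sum>v\<in>?S. U v *\<^sub>R v) = 0"
      using affine_dependent_explicit_finite[of ?S] by auto
    define b where "b j = U (w j)" for j
    have b1: "(\<Sum>j\<in>{0..CARD('n)}. b j) = 0" using U(1) by (simp add: sum.reindex[OF inj] b_def)
    have b2: "(\<Sum>j\<in>{0..CARD('n)}. b j *\<^sub>R w j) = 0" using U(3) by (simp add: sum.reindex[OF inj] b_def)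
    have rel: "b j * mu 0 = mu j * b 0" if "j \<le> CARD('n)" for j
      using dep_uniq[OF d0 b2 mu(2) that] .
    have "(\<Sum>j\<in>{0..CARD('n)}. b j * mu 0) = (\<Sum>j\<in>{0..CARD('n)}. mu j * b 0)"
      using rel by (intro sum.cong) auto
    then have "0 = (\<Sum>j\<in>{0..CARD('n)}. mu j) * b 0"
      using b1 by (simp add: sum_distrib_right[symmetric])
    then have "b 0 = 0" using spos by simp
    then have "b j = 0" if "j \<le> CARD('n)" for j using rel[OF that] mu(1) by auto
    then show False using U(2) b_def by auto
  qed
  define u where "u x = mu (the_inv_into {0..CARD('n)} w x) / (\<Sum>i\<in>{0..CARD('n)}. mu i)" for x
  have uw: "u (w j) = mu j / (\<Sum>i\<in>{0..CARD('n)}. mu i)" if "j \<le> CARD('n)" for j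
    using that inj by (simp add: u_def the_inv_into_f_f)
  have f1: "\<forall>x\<in>?S. 0 < u x" using uw mu(1) spos by auto
  have f2: "sum u ?S = 1"
  proof -
    have "sum u ?S = (\<Sum>j\<in>{0..CARD('n)}. mu j / (\<Sum>i\<in>{0..CARD('n)}. mu i))"
      by (simp add: sum.reindex[OF inj] uw)
    also have "\<dots> = 1" using spos by (simp add: sum_divide_distrib[symmetric])
    finally show ?thesis .
  qed
  have f3: "(\<Sum>x\<in>?S. u x *\<^sub>R x) = 0"
  proof -
    have "(\<Sum>x\<in>?S. u x *\<^sub>R x) = (\<Sum>j\<in>{0..CARD('n)}. (mu j / (\<Sum>i\<in>{0..CARD('n)}. mu i)) *\<^sub>R w j)"
      by (simp add: sum.reindex[OF inj] uw)
    also have "\<dots> = (1 / (\<Sum>i\<in>{0..CARD('n)}. mu i)) *\<^sub>R (\<Sum>j\<in>{0..CARD('n)}. mu j *\<^sub>R w j)"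
      by (simp add: scaleR_sum_right)
    also have "\<dots> = 0" using mu(2) by simp
    finally show ?thesis .
  qed
  have ex: "\<exists>u. (\<forall>x \<in> ?S. 0 < u x) \<and> sum u ?S = 1 \<and> (\<Sum>x\<in>?S. u x *\<^sub>R x) = 0"
    using f1 f2 f3 by (intro exI[of _ u]) simp
  have "\<not> card ?S \<le> DIM(real^('n::{finite,linorder}))" using cS by simp
  then have "interior (convex hull ?S) = {y. \<exists>u. (\<forall>x \<in> ?S. 0 < u x) \<and> sum u ?S = 1 \<and> (\<Sum>x\<in>?S. u x *\<^sub>R x) = y}"
    using interior_convex_hull_explicit_minimal[OF nad] by (simp only: if_False)
  then show ?thesis using ex by (simp only: mem_Collect_eq)
qed





lemma pm1_prod: "finite A \<Longrightarrow> (\<And>s. s \<in> A \<Longrightarrow> g s \<in> {-1, 1::real}) \<Longrightarrow> prod g A \<in> {-1, 1}"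
proof (induction A rule: finite_induct)
  case empty then show ?case by simp
next
  case (insert x F)
  have a: "g x \<in> {-1,1}" using insert.prems[of x] by simp
  have b: "prod g F \<in> {-1,1}" using insert.IH insert.prems by simp
  show ?case using a b insert.hyps by auto
qed

lemma pm1_sgn: "x \<in> {-1, 1::real} \<Longrightarrow> sgn x = x"
  by auto

lemma dd_scale:
  fixes v :: "nat \<Rightarrow> real^('n::{finite,linorder})"
  shows "dd (\<lambda>j. c j *\<^sub>R v j) i = (\<Prod>s<CARD('n). om c i s) * dd v i"
proof -
  have "M (om (\<lambda>j. c j *\<^sub>R v j) i) = (\<chi> k. om c i (coord_rank k) *s (M (om v i) :: real^('n::{finite,linorder})^('n::{finite,linorder})) $ k)"
    by (simp add: M_def om_def vec_eq_iff scalar_mult_eq_scaleR)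
  then have "dd (\<lambda>j. c j *\<^sub>R v j) i = (\<Prod>k\<in>(UNIV::'n set). om c i (coord_rank k)) * dd v i"
    unfolding dd_def using det_rows_mul[of "\<lambda>k. om c i (coord_rank k)" "\<lambda>k. (M (om v i) :: real^('n::{finite,linorder})^('n::{finite,linorder})) $ k"]
    by simp
  then show ?thesis by (simp add: prod_rk)
qed

lemma Pfun_eq: "Pfun (v :: nat \<Rightarrow> real^('n::{finite,linorder})) = (\<Prod>i\<in>{0..CARD('n)}. sgn (dd v i))"
  unfolding Pfun_def dd_def by (intro prod.cong) (auto simp: Or_omit)

lemma Sfun_eq: "Sfun (w :: nat \<Rightarrow> real^('n::{finite,linorder})) =
   (if 0 \<in> interior (convex hull (w ` {0..CARD('n)})) then sgn (dd w 0) else 0)"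
  unfolding Sfun_def dd_def by (simp add: Or_omit)

lemma sign_prod_even: "(\<Prod>s<2*m. (-1::real) ^ Suc s) = (-1) ^ m"
proof (induction m)
  case 0 then show ?case by simp
next
  case (Suc m)
  have "2 * Suc m = Suc (Suc (2 * m))" by simp
  then have "(\<Prod>s<2*Suc m. (-1::real) ^ Suc s) = (\<Prod>s<2*m. (-1::real) ^ Suc s) * (-1) ^ Suc (2*m) * (-1) ^ Suc (Suc (2*m))"
    by (simp only: prod.lessThan_Suc mult.assoc)
  also have "\<dots> = (\<Prod>s<2*m. (-1::real) ^ Suc s) * (-1)" by simp
  finally show ?case using Suc by simp
qed



theorem corollary8p3:
  fixes v :: "nat \<Rightarrow> real^('n::{finite,linorder})"
  assumes "even CARD('n)"
  shows "Pfun v = (-1) ^ (CARD('n) div 2) * 2 ^ CARD('n) * Sm v"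
proof -
  obtain m where m: "CARD('n) = 2*m" using assms by (auto elim: evenE)
  have "0 < CARD('n)" by simp
  then have n2: "2 \<le> CARD('n)" using m by simp
  let ?P = "{0..CARD('n)} \<rightarrow>\<^sub>E {-1,1::real}"
  define sc where "sc \<sigma> = (\<lambda>i. \<sigma> i *\<^sub>R v i)" for \<sigma> :: "nat \<Rightarrow> real"
  have Sm_eq: "Sm v = 1 / 2^(CARD('n)+1) * (\<Sum>\<sigma>\<in>?P. Sfun (sc \<sigma>))"
    by (simp add: Sm_def sc_def)
  have pm: "\<sigma> i \<in> {-1,1}" if "\<sigma> \<in> ?P" "i \<le> CARD('n)" for \<sigma> i
    using that by auto
  have ddsc: "dd (sc \<sigma>) i = (\<Prod>s<CARD('n). om \<sigma> i s) * dd v i \<and> (\<Prod>s<CARD('n). om \<sigma> i s) \<in> {-1,1}"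
    if "\<sigma> \<in> ?P" "i \<le> CARD('n)" for \<sigma> i
  proof
    show "dd (sc \<sigma>) i = (\<Prod>s<CARD('n). om \<sigma> i s) * dd v i"
      unfolding sc_def by (rule dd_scale)
    show "(\<Prod>s<CARD('n). om \<sigma> i s) \<in> {-1,1}"
    proof (rule pm1_prod)
      fix s assume "s \<in> {..<CARD('n)}"
      then show "om \<sigma> i s \<in> {-1,1}" using pm[OF that(1)] that(2) by (auto simp: om_def)
    qed simp
  qed
  show ?thesis
  proof (cases "\<forall>i\<le>CARD('n). dd v i \<noteq> 0")
    case False
    then obtain i where i: "i \<le> CARD('n)" "dd v i = 0" by auto
    have P0: "Pfun v = 0" unfolding Pfun_eq using i by (intro prod_zero) (auto intro!: bexI[of _ i])
    have S0: "Sfun (sc \<sigma>) = 0" if "\<sigma> \<in> ?P" for \<sigma>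
    proof (rule ccontr)
      assume "Sfun (sc \<sigma>) \<noteq> 0"
      then have int: "0 \<in> interior (convex hull (sc \<sigma> ` {0..CARD('n)}))"
        unfolding Sfun_eq by (auto split: if_splits)
      have "dd (sc \<sigma>) i \<noteq> 0" by (rule nondeg_of_int[OF int i(1)])
      moreover have "dd (sc \<sigma>) i = 0" using ddsc[OF that i(1)] i(2) by simp
      ultimately show False by simp
    qed
    then have "Sm v = 0" using Sm_eq by simp
    then show ?thesis using P0 by simp
  next
    case True
    define d0 where "d0 = dd v 0"
    have d0: "d0 \<noteq> 0" using True by (simp add: d0_def)
    have d0': "dd v 0 \<noteq> 0" using True by simp
    define lam where "lam i = (-1)^i * dd v i / d0" for i
    have lamdep: "(\<Sum>i\<in>{0..CARD('n)}. lam i *\<^sub>R v i) = 0"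
    proof -
      have "(\<Sum>i\<in>{0..CARD('n)}. lam i *\<^sub>R v i) = (1/d0) *\<^sub>R (\<Sum>i\<in>{0..CARD('n)}. ((-1)^i * dd v i) *\<^sub>R v i)"
        unfolding scaleR_sum_right by (rule sum.cong) (simp_all add: lam_def)
      also have "\<dots> = 0" using cramer_dep[OF d0'] by simp
      finally show ?thesis .
    qed
    have lam0: "lam 0 = 1" using d0 by (simp add: lam_def d0_def)
    have lamnz: "lam i \<noteq> 0" if "i \<le> CARD('n)" for i
      using True that d0 by (simp add: lam_def)
    define sg where "sg i = sgn (lam i)" for i
    have sgpm: "sg i \<in> {-1,1}" if "i \<le> CARD('n)" for i
      using lamnz[OF that] by (cases "lam i > 0") (auto simp: sg_def)
    have sglam: "sg i * \<bar>lam i\<bar> = lam i" for i by (simp add: sg_def sgn_mult_abs)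
    have sg0: "sg 0 = 1" by (simp add: sg_def lam0)
    define Sp where "Sp = restrict sg {0..CARD('n)}"
    define Sn where "Sn = restrict (\<lambda>i. - sg i) {0..CARD('n)}"
    have sgall: "\<forall>x\<in>{0..CARD('n)}. sg x \<in> {-1,1}" using sgpm by simp
    have SpP: "Sp \<in> ?P" using sgall unfolding Sp_def by (simp add: restrict_PiE_iff)
    have SnP: "Sn \<in> ?P" using sgall unfolding Sn_def by (auto simp: restrict_PiE_iff)
    have SpSn: "Sp \<noteq> Sn"
    proof
      assume "Sp = Sn"
      then have "Sp 0 = Sn 0" by simp
      then show False by (simp add: Sp_def Sn_def sg0)
    qed
    have nd_sc: "\<forall>i\<le>CARD('n). dd (sc \<sigma>) i \<noteq> 0" if "\<sigma> \<in> ?P" for \<sigma>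
    proof (intro allI impI)
      fix i assume i: "i \<le> CARD('n)"
      let ?p = "\<Prod>s<CARD('n). om \<sigma> i s"
      have h: "dd (sc \<sigma>) i = ?p * dd v i" "?p \<in> {-1,1}" using ddsc[OF that i] by auto
      have h1: "?p \<noteq> 0" using h(2) by (auto simp del: prod_zero_iff)
      have h2: "dd v i \<noteq> 0" using True i by simp
      show "dd (sc \<sigma>) i \<noteq> 0" using h(1) h1 h2 by (metis mult_eq_0_iff)
    qed
    have char: "0 \<in> interior (convex hull (sc \<sigma> ` {0..CARD('n)})) \<longleftrightarrow> \<sigma> = Sp \<or> \<sigma> = Sn"
      if sP: "\<sigma> \<in> ?P" for \<sigma>
    proof
      assume int: "0 \<in> interior (convex hull (sc \<sigma> ` {0..CARD('n)}))"
      have "\<exists>mu. (\<forall>i\<le>CARD('n). mu i > 0) \<and> (\<Sum>i\<in>{0..CARD('n)}. mu i *\<^sub>R sc \<sigma> i) = 0"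
        using pos_dep_of_int[OF int] by (rule conjunct2)
      then obtain mu where mu1: "\<forall>i\<le>CARD('n). mu i > 0"
        and mu2: "(\<Sum>i\<in>{0..CARD('n)}. mu i *\<^sub>R sc \<sigma> i) = 0" by (elim exE conjE)
      have dep: "(\<Sum>i\<in>{0..CARD('n)}. (mu i * \<sigma> i) *\<^sub>R v i) = 0"
        using mu2 by (simp add: sc_def)
      have rel: "\<sigma> i = sg i * \<sigma> 0" if i: "i \<le> CARD('n)" for i
      proof -
        have "(mu i * \<sigma> i) * lam 0 = lam i * (mu 0 * \<sigma> 0)"
          by (rule dep_uniq[OF d0' dep lamdep i])
        then have "sgn (mu i * \<sigma> i) = sgn (lam i * (mu 0 * \<sigma> 0))" using lam0 by simp
        moreover have "sgn (mu i) = 1" "sgn (mu 0) = 1" using mu1 i by auto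
        moreover have "sgn (\<sigma> i) = \<sigma> i" "sgn (\<sigma> 0) = \<sigma> 0"
          using pm1_sgn pm[OF sP i] pm[OF sP, of 0] by auto
        ultimately show ?thesis by (simp add: sgn_mult sg_def)
      qed
      have "\<sigma> 0 \<in> {-1,1}" using pm[OF sP, of 0] by simp
      then show "\<sigma> = Sp \<or> \<sigma> = Sn"
      proof
        assume s0: "\<sigma> 0 = -1"
        have "\<sigma> = Sn"
        proof
          fix x show "\<sigma> x = Sn x"
            using rel[of x] s0 PiE_arb[OF sP, of x] by (cases "x \<le> CARD('n)") (auto simp: Sn_def)
        qed
        then show ?thesis by simp
      next
        assume "\<sigma> 0 \<in> {1}"
        then have s0: "\<sigma> 0 = 1" by simp
        have "\<sigma> = Sp"
        proof
          fix x show "\<sigma> x = Sp x"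
            using rel[of x] s0 PiE_arb[OF sP, of x] by (cases "x \<le> CARD('n)") (auto simp: Sp_def)
        qed
        then show ?thesis by simp
      qed
    next
      assume h: "\<sigma> = Sp \<or> \<sigma> = Sn"
      have "\<exists>e\<in>{-1,1::real}. \<forall>i\<le>CARD('n). \<sigma> i = e * sg i"
      proof (cases "\<sigma> = Sp")
        case True then show ?thesis by (intro bexI[of _ 1]) (auto simp: Sp_def)
      next
        case False then have "\<sigma> = Sn" using h by simp
        then show ?thesis by (intro bexI[of _ "-1"]) (auto simp: Sn_def)
      qed
      then obtain e where e: "e \<in> {-1,1::real}" "\<forall>i\<le>CARD('n). \<sigma> i = e * sg i"
        by blast
      show "0 \<in> interior (convex hull (sc \<sigma> ` {0..CARD('n)}))"
      proof (rule int_of_pos_dep[OF n2 nd_sc[OF sP], of "\<lambda>i. \<bar>lam i\<bar>"])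
        show "\<forall>i\<le>CARD('n). \<bar>lam i\<bar> > 0" using lamnz by auto
        have "(\<Sum>i\<in>{0..CARD('n)}. \<bar>lam i\<bar> *\<^sub>R sc \<sigma> i) = (\<Sum>i\<in>{0..CARD('n)}. e *\<^sub>R (lam i *\<^sub>R v i))"
        proof (rule sum.cong[OF refl])
          fix i assume "i \<in> {0..CARD('n)}"
          then have "\<sigma> i = e * sg i" using e(2) by simp
          then have "\<bar>lam i\<bar> * \<sigma> i = e * lam i" using sglam[of i] by (simp add: algebra_simps)
          then show "\<bar>lam i\<bar> *\<^sub>R sc \<sigma> i = e *\<^sub>R (lam i *\<^sub>R v i)" by (simp add: sc_def)
        qed
        also have "\<dots> = e *\<^sub>R (\<Sum>i\<in>{0..CARD('n)}. lam i *\<^sub>R v i)" by (simp add: scaleR_sum_right)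
        also have "\<dots> = 0" using lamdep by simp
        finally show "(\<Sum>i\<in>{0..CARD('n)}. \<bar>lam i\<bar> *\<^sub>R sc \<sigma> i) = 0" .
      qed
    qed
    define Q where "Q = (\<Prod>s<CARD('n). sg (Suc s))"
    have val: "Sfun (sc \<sigma>) = (\<Prod>s<CARD('n). \<sigma> (Suc s)) * sgn d0" if sP: "\<sigma> \<in> ?P" "\<sigma> = Sp \<or> \<sigma> = Sn" for \<sigma>
    proof -
      have "Sfun (sc \<sigma>) = sgn (dd (sc \<sigma>) 0)" using char[OF sP(1)] sP(2) by (simp add: Sfun_eq)
      also have "\<dots> = sgn ((\<Prod>s<CARD('n). \<sigma> (Suc s)) * d0)"
        using ddsc[OF sP(1), of 0] by (simp add: om0 d0_def)
      also have "\<dots> = (\<Prod>s<CARD('n). \<sigma> (Suc s)) * sgn d0"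
        using ddsc[OF sP(1), of 0] by (simp add: om0 sgn_mult pm1_sgn)
      finally show ?thesis .
    qed
    have valp: "Sfun (sc Sp) = Q * sgn d0"
      using val[OF SpP] unfolding Q_def by (simp add: Sp_def)
    have valn: "Sfun (sc Sn) = Q * sgn d0"
    proof -
      have "(\<Prod>s<CARD('n). Sn (Suc s)) = (\<Prod>s<CARD('n). (-1) * sg (Suc s))"
        by (rule prod.cong) (auto simp: Sn_def)
      also have "\<dots> = (-1)^CARD('n) * Q" by (simp only: prod.distrib prod_constant card_lessThan Q_def)
      also have "\<dots> = Q" using m by simp
      finally show ?thesis using val[OF SnP] by simp
    qed
    have sumeq: "(\<Sum>\<sigma>\<in>?P. Sfun (sc \<sigma>)) = 2 * Q * sgn d0"
    proof -
      have "(\<Sum>\<sigma>\<in>?P. Sfun (sc \<sigma>)) = (\<Sum>\<sigma>\<in>{Sp, Sn}. Sfun (sc \<sigma>))"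
      proof (rule sum.mono_neutral_right)
        show "finite ?P" by (rule finite_PiE) auto
        show "{Sp, Sn} \<subseteq> ?P" using SpP SnP by simp
        show "\<forall>\<sigma>\<in>?P - {Sp, Sn}. Sfun (sc \<sigma>) = 0"
          using char by (auto simp: Sfun_eq)
      qed
      also have "\<dots> = Sfun (sc Sp) + Sfun (sc Sn)" using SpSn by simp
      finally show ?thesis using valp valn by simp
    qed
    have sgS: "sg (Suc s) = (-1)^(Suc s) * sgn (dd v (Suc s)) * sgn d0" for s
    proof (cases "d0 > 0")
      case True then show ?thesis by (simp add: sg_def lam_def sgn_mult)
    next
      case False then have "d0 < 0" using d0 by simp
      then show ?thesis by (simp add: sg_def lam_def sgn_mult)
    qed
    have sd2: "sgn d0 ^ CARD('n) = 1"
    proof -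
      have "sgn d0 * sgn d0 = 1" using d0 by (cases "d0 > 0") auto
      then show ?thesis using m by (simp add: power_mult power2_eq_square)
    qed
    have Qeq: "Q = (-1)^m * (\<Prod>s<CARD('n). sgn (dd v (Suc s)))"
    proof -
      have "Q = (\<Prod>s<CARD('n). (-1::real)^(Suc s)) * (\<Prod>s<CARD('n). sgn (dd v (Suc s))) * (\<Prod>s<CARD('n). sgn d0)"
        unfolding Q_def sgS prod.distrib by (rule refl)
      also have "\<dots> = (-1)^m * (\<Prod>s<CARD('n). sgn (dd v (Suc s)))"
        using sd2 sign_prod_even[of m] m by simp
      finally show ?thesis .
    qed
    have Peq: "Pfun v = sgn d0 * (\<Prod>s<CARD('n). sgn (dd v (Suc s)))"
      unfolding Pfun_eq d0_def by (simp add: prod.atLeast_Suc_atMost prod.atLeast1_atMost_eq)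
    have "Sm v = 1 / 2^(CARD('n)+1) * (2 * Q * sgn d0)" using Sm_eq sumeq by simp
    also have "\<dots> = (-1)^m * Pfun v / 2^CARD('n)"
      unfolding Qeq Peq by (simp add: field_simps)
    finally have "Sm v = (-1)^m * Pfun v / 2^CARD('n)" .
    moreover have "CARD('n) div 2 = m" using m by simp
    ultimately show ?thesis by (simp add: power_mult_distrib[symmetric])
  qed
qed


end
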